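(* Let $y_A\colon A\to\hat A$ be a yoneda embedding in a double category $\mathcal K$. If a cell $\eta$ with horizontal source $J\colon A\nrightarrow B$, vertical sides $y_A$ and $l\colon B\to\hat A$, and horizontal target $1_{\hat A}$ defines $l$ as the left Kan extension of $y_A$ along $J$, then $\eta$ is cartesian and, moreover, it defines $l$ as the pointwise left Kan extension of $y_A$ along $J$.
   Context: Double categories: a double category has objects, vertical morphisms (composition $\circ$), horizontal morphisms $J\colon A\nrightarrow B$ (composition $\odot$ in diagrammatic order, units $1_A$) and cells with horizontal source $J\colon A\nrightarrow B$, horizontal target $K\colon C\nrightarrow D$, vertical sides $f\colon A\to C$, $g\colon B\to D$. Vertical cells are cells whose horizontal source and target are units. A cell $\phi\colon J\Rightarrow K$ with sides $f,g$ is cartesian if every cell $H\Rightarrow K$ with sides $f\circ h,g\circ k$ factors uniquely through $\phi$ via a cell $H\Rightarrow J$ with sides $h,k$. Kan extensions: a cell $\eta$ with horizontal source $J\colon A\nrightarrow B$, vertical sides $d\colon A\to M$, $l\colon B\to M$ and target $1_M$ defines $l$ as the left Kan extension of $d$ along $J$ if every cell with source $J$, sides $d,k$ and target $1_M$ factors uniquely as $\eta$ horizontally composed with a vertical cell $l\Rightarrow k$; pointwise if moreover for every $H\colon B\nrightarrow C$ every cell with horizontal source $J\odot H$, sides $d$ and $k\colon C\to M$ and target $1_M$ factors uniquely as $\eta\odot\psi$ with $\psi\colon H\Rightarrow 1_M$ having sides $l,k$. Yoneda embedding: a vertical morphism $y_A\colon A\to\hat A$ such that (c) for every $J\colon A\nrightarrow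 B$ there exists a cartesian cell $J\Rightarrow 1_{\hat A}$ with vertical sides $y_A$ and some $g\colon B\to\hat A$; and (e) every cartesian cell $J\Rightarrow 1_{\hat A}$ with vertical sides $y_A,l$ defines $l$ as the pointwise left Kan extension of $y_A$ along $J$. *)

theory Defs
  imports Main
begin

text \<open>
  All elements of the types 'o, 'v, 'h, 'c are
  objects, vertical morphisms, horizontal morphisms and cells respectively;
  the (total) composition operations are only constrained on composable
  arguments.
  Conventions:
   vcomp D g f  = g o f   (vertical morphisms, f first)
   hcomp D J H  = J (.) H (horizontal morphisms, diagrammatic: J : A -|-> B, H : B -|-> C)
   ccomp D psi phi = vertical composite of cells, phi on top, psi below
   chcomp D phi psi = horizontal composite of cells, diagrammatic
   cunit D f    = unit cell 1_f : 1_A => 1_C of f : A -> C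
   assoc D J H K : (J (.) H) (.) K => J (.) (H (.) K)
   lunitor D J   : 1_A (.) J => J
   runitor D J   : J (.) 1_B => J
\<close>

record ('o, 'v, 'h, 'c) dbl =
  vdom :: "'v \<Rightarrow> 'o"
  vcod :: "'v \<Rightarrow> 'o"
  vid :: "'o \<Rightarrow> 'v"
  vcomp :: "'v \<Rightarrow> 'v \<Rightarrow> 'v"
  hsrc :: "'h \<Rightarrow> 'o"
  htgt :: "'h \<Rightarrow> 'o"
  hunit :: "'o \<Rightarrow> 'h"
  hcomp :: "'h \<Rightarrow> 'h \<Rightarrow> 'h"
  csrc :: "'c \<Rightarrow> 'h"
  ctgt :: "'c \<Rightarrow> 'h"
  cleft :: "'c \<Rightarrow> 'v"
  cright :: "'c \<Rightarrow> 'v"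
  cid :: "'h \<Rightarrow> 'c"
  ccomp :: "'c \<Rightarrow> 'c \<Rightarrow> 'c"
  cunit :: "'v \<Rightarrow> 'c"
  chcomp :: "'c \<Rightarrow> 'c \<Rightarrow> 'c"
  assoc :: "'h \<Rightarrow> 'h \<Rightarrow> 'h \<Rightarrow> 'c"
  lunitor :: "'h \<Rightarrow> 'c"
  runitor :: "'h \<Rightarrow> 'c"

definition is_cell :: "('o,'v,'h,'c) dbl \<Rightarrow> 'c \<Rightarrow> 'h \<Rightarrow> 'h \<Rightarrow> 'v \<Rightarrow> 'v \<Rightarrow> bool" where
  "is_cell D \<phi> J K f g \<longleftrightarrow>
     csrc D \<phi> = J \<and> ctgt D \<phi> = K \<and> cleft D \<phi> = f \<and> cright D \<phi> = g"

definition iso_cell :: "('o,'v,'h,'c) dbl \<Rightarrow> 'c \<Rightarrow> bool" where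
  "iso_cell D \<phi> \<longleftrightarrow> (\<exists>\<psi>. csrc D \<psi> = ctgt D \<phi> \<and> ctgt D \<psi> = csrc D \<phi> \<and>
      ccomp D \<psi> \<phi> = cid D (csrc D \<phi>) \<and> ccomp D \<phi> \<psi> = cid D (ctgt D \<phi>))"

locale double_category =
  fixes D :: "('o,'v,'h,'c) dbl"
  assumes
    vid_dom: "vdom D (vid D A) = A" and
    vid_cod: "vcod D (vid D A) = A" and
    vcomp_dom: "vcod D f = vdom D g \<Longrightarrow> vdom D (vcomp D g f) = vdom D f" and
    vcomp_cod: "vcod D f = vdom D g \<Longrightarrow> vcod D (vcomp D g f) = vcod D g" and
    vcomp_idl: "vcomp D (vid D (vcod D f)) f = f" and
    vcomp_idr: "vcomp D f (vid D (vdom D f)) = f" and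
    vcomp_assoc: "\<lbrakk>vcod D f = vdom D g; vcod D g = vdom D h\<rbrakk> \<Longrightarrow>
       vcomp D h (vcomp D g f) = vcomp D (vcomp D h g) f" and
    hunit_src: "hsrc D (hunit D A) = A" and
    hunit_tgt: "htgt D (hunit D A) = A" and
    hcomp_src: "htgt D J = hsrc D H \<Longrightarrow> hsrc D (hcomp D J H) = hsrc D J" and
    hcomp_tgt: "htgt D J = hsrc D H \<Longrightarrow> htgt D (hcomp D J H) = htgt D H" and
    cell_bdry: "hsrc D (csrc D \<phi>) = vdom D (cleft D \<phi>) \<and> htgt D (csrc D \<phi>) = vdom D (cright D \<phi>)
       \<and> hsrc D (ctgt D \<phi>) = vcod D (cleft D \<phi>) \<and> htgt D (ctgt D \<phi>) = vcod D (cright D \<phi>)" and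
    cid_cell: "is_cell D (cid D J) J J (vid D (hsrc D J)) (vid D (htgt D J))" and
    ccomp_cell: "ctgt D \<phi> = csrc D \<psi> \<Longrightarrow>
       is_cell D (ccomp D \<psi> \<phi>) (csrc D \<phi>) (ctgt D \<psi>)
         (vcomp D (cleft D \<psi>) (cleft D \<phi>)) (vcomp D (cright D \<psi>) (cright D \<phi>))" and
    ccomp_idl: "ccomp D (cid D (ctgt D \<phi>)) \<phi> = \<phi>" and
    ccomp_idr: "ccomp D \<phi> (cid D (csrc D \<phi>)) = \<phi>" and
    ccomp_assoc: "\<lbrakk>ctgt D \<phi> = csrc D \<psi>; ctgt D \<psi> = csrc D \<chi>\<rbrakk> \<Longrightarrow>
       ccomp D \<chi> (ccomp D \<psi> \<phi>) = ccomp D (ccomp D \<chi> \<psi>) \<phi>" and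
    cunit_cell: "is_cell D (cunit D f) (hunit D (vdom D f)) (hunit D (vcod D f)) f f" and
    cunit_id: "cunit D (vid D A) = cid D (hunit D A)" and
    cunit_comp: "vcod D f = vdom D g \<Longrightarrow> cunit D (vcomp D g f) = ccomp D (cunit D g) (cunit D f)" and
    chcomp_cell: "cright D \<phi> = cleft D \<psi> \<Longrightarrow>
       is_cell D (chcomp D \<phi> \<psi>) (hcomp D (csrc D \<phi>) (csrc D \<psi>)) (hcomp D (ctgt D \<phi>) (ctgt D \<psi>))
         (cleft D \<phi>) (cright D \<psi>)" and
    chcomp_id: "htgt D J = hsrc D H \<Longrightarrow> chcomp D (cid D J) (cid D H) = cid D (hcomp D J H)" and
    interchange: "\<lbrakk>ctgt D \<phi> = csrc D \<phi>'; ctgt D \<psi> = csrc D \<psi>';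
        cright D \<phi> = cleft D \<psi>; cright D \<phi>' = cleft D \<psi>'\<rbrakk> \<Longrightarrow>
       chcomp D (ccomp D \<phi>' \<phi>) (ccomp D \<psi>' \<psi>) = ccomp D (chcomp D \<phi>' \<psi>') (chcomp D \<phi> \<psi>)" and
    assoc_cell: "\<lbrakk>htgt D J = hsrc D H; htgt D H = hsrc D K\<rbrakk> \<Longrightarrow>
       is_cell D (assoc D J H K) (hcomp D (hcomp D J H) K) (hcomp D J (hcomp D H K))
         (vid D (hsrc D J)) (vid D (htgt D K))" and
    assoc_iso: "\<lbrakk>htgt D J = hsrc D H; htgt D H = hsrc D K\<rbrakk> \<Longrightarrow> iso_cell D (assoc D J H K)" and
    assoc_nat: "\<lbrakk>cright D \<phi> = cleft D \<psi>; cright D \<psi> = cleft D \<chi>\<rbrakk> \<Longrightarrow>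
       ccomp D (assoc D (ctgt D \<phi>) (ctgt D \<psi>) (ctgt D \<chi>)) (chcomp D (chcomp D \<phi> \<psi>) \<chi>)
       = ccomp D (chcomp D \<phi> (chcomp D \<psi> \<chi>)) (assoc D (csrc D \<phi>) (csrc D \<psi>) (csrc D \<chi>))" and
    lunitor_cell: "is_cell D (lunitor D J) (hcomp D (hunit D (hsrc D J)) J) J
         (vid D (hsrc D J)) (vid D (htgt D J))" and
    lunitor_iso: "iso_cell D (lunitor D J)" and
    lunitor_nat: "ccomp D (lunitor D (ctgt D \<phi>)) (chcomp D (cunit D (cleft D \<phi>)) \<phi>)
       = ccomp D \<phi> (lunitor D (csrc D \<phi>))" and
    runitor_cell: "is_cell D (runitor D J) (hcomp D J (hunit D (htgt D J))) J
         (vid D (hsrc D J)) (vid D (htgt D J))" and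
    runitor_iso: "iso_cell D (runitor D J)" and
    runitor_nat: "ccomp D (runitor D (ctgt D \<phi>)) (chcomp D \<phi> (cunit D (cright D \<phi>)))
       = ccomp D \<phi> (runitor D (csrc D \<phi>))" and
    pentagon: "\<lbrakk>htgt D J = hsrc D H; htgt D H = hsrc D K; htgt D K = hsrc D L\<rbrakk> \<Longrightarrow>
       ccomp D (assoc D J H (hcomp D K L)) (assoc D (hcomp D J H) K L)
       = ccomp D (chcomp D (cid D J) (assoc D H K L))
           (ccomp D (assoc D J (hcomp D H K) L) (chcomp D (assoc D J H K) (cid D L)))" and
    triangle: "htgt D J = hsrc D H \<Longrightarrow>
       ccomp D (chcomp D (cid D J) (lunitor D H)) (assoc D J (hunit D (htgt D J)) H)
       = chcomp D (runitor D J) (cid D H)"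

definition cartesian :: "('o,'v,'h,'c) dbl \<Rightarrow> 'c \<Rightarrow> bool" where
  "cartesian D \<phi> \<longleftrightarrow>
    (\<forall>\<psi> h k. vcod D h = vdom D (cleft D \<phi>) \<and> vcod D k = vdom D (cright D \<phi>) \<and>
       ctgt D \<psi> = ctgt D \<phi> \<and>
       cleft D \<psi> = vcomp D (cleft D \<phi>) h \<and> cright D \<psi> = vcomp D (cright D \<phi>) k \<longrightarrow>
       (\<exists>!\<chi>. is_cell D \<chi> (csrc D \<psi>) (csrc D \<phi>) h k \<and> ccomp D \<phi> \<chi> = \<psi>))"

definition vertical_cell :: "('o,'v,'h,'c) dbl \<Rightarrow> 'c \<Rightarrow> 'v \<Rightarrow> 'v \<Rightarrow> bool" where
  "vertical_cell D \<nu> f g \<longleftrightarrow>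
     is_cell D \<nu> (hunit D (vdom D f)) (hunit D (vcod D f)) f g"

text \<open>The horizontal composite eta (.) nu : J (.) 1_B => 1_M (.) 1_M is identified with a
  cell J => 1_M via the unitors: zeta "equals" eta (.) nu means
  zeta o rho_J = lambda_(1_M) o (eta (.) nu).\<close>
definition left_kan :: "('o,'v,'h,'c) dbl \<Rightarrow> 'c \<Rightarrow> 'h \<Rightarrow> 'v \<Rightarrow> 'v \<Rightarrow> bool" where
  "left_kan D \<eta> J d l \<longleftrightarrow>
     is_cell D \<eta> J (hunit D (vcod D d)) d l \<and>
     (\<forall>\<zeta> k. is_cell D \<zeta> J (hunit D (vcod D d)) d k \<longrightarrow>
        (\<exists>!\<nu>. vertical_cell D \<nu> l k \<and>
           ccomp D \<zeta> (runitor D J) = ccomp D (lunitor D (hunit D (vcod D d))) (chcomp D \<eta> \<nu>)))"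

definition pointwise_left_kan :: "('o,'v,'h,'c) dbl \<Rightarrow> 'c \<Rightarrow> 'h \<Rightarrow> 'v \<Rightarrow> 'v \<Rightarrow> bool" where
  "pointwise_left_kan D \<eta> J d l \<longleftrightarrow>
     left_kan D \<eta> J d l \<and>
     (\<forall>H \<zeta> k. hsrc D H = htgt D J \<and> is_cell D \<zeta> (hcomp D J H) (hunit D (vcod D d)) d k \<longrightarrow>
        (\<exists>!\<psi>. is_cell D \<psi> H (hunit D (vcod D d)) l k \<and>
           \<zeta> = ccomp D (lunitor D (hunit D (vcod D d))) (chcomp D \<eta> \<psi>)))"

text \<open>y : A -> A^ is a yoneda embedding (conditions (c) and (e)).\<close>
definition yoneda_embedding :: "('o,'v,'h,'c) dbl \<Rightarrow> 'v \<Rightarrow> bool" where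
  "yoneda_embedding D y \<longleftrightarrow>
     (\<forall>J. hsrc D J = vdom D y \<longrightarrow>
        (\<exists>\<phi> g. is_cell D \<phi> J (hunit D (vcod D y)) y g \<and> cartesian D \<phi>)) \<and>
     (\<forall>\<phi> J l. is_cell D \<phi> J (hunit D (vcod D y)) y l \<and> cartesian D \<phi> \<longrightarrow>
        pointwise_left_kan D \<phi> J y l)"

end

theory Submission
  imports Defs
begin

context double_category
begin

abbreviation cc (infix "\<cdot>" 70) where "x \<cdot> y \<equiv> ccomp D x y"
abbreviation hc (infix "\<odot>" 75) where "x \<odot> y \<equiv> chcomp D x y"

lemma cc_bd[simp]:
  assumes "ctgt D \<phi> = csrc D \<psi>"
  shows "csrc D (\<psi> \<cdot> \<phi>) = csrc D \<phi>" "ctgt D (\<psi> \<cdot> \<phi>) = ctgt D \<psi>"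
    "cleft D (\<psi> \<cdot> \<phi>) = vcomp D (cleft D \<psi>) (cleft D \<phi>)"
    "cright D (\<psi> \<cdot> \<phi>) = vcomp D (cright D \<psi>) (cright D \<phi>)"
  using ccomp_cell[OF assms] by (auto simp: is_cell_def)

lemma hc_bd[simp]:
  assumes "cright D \<phi> = cleft D \<psi>"
  shows "csrc D (\<phi> \<odot> \<psi>) = hcomp D (csrc D \<phi>) (csrc D \<psi>)"
    "ctgt D (\<phi> \<odot> \<psi>) = hcomp D (ctgt D \<phi>) (ctgt D \<psi>)"
    "cleft D (\<phi> \<odot> \<psi>) = cleft D \<phi>" "cright D (\<phi> \<odot> \<psi>) = cright D \<psi>"
  using chcomp_cell[OF assms] by (auto simp: is_cell_def)

lemma cid_bd[simp]: "csrc D (cid D J) = J" "ctgt D (cid D J) = J"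
  "cleft D (cid D J) = vid D (hsrc D J)" "cright D (cid D J) = vid D (htgt D J)"
  using cid_cell by (auto simp: is_cell_def)

lemma cunit_bd[simp]: "csrc D (cunit D f) = hunit D (vdom D f)" "ctgt D (cunit D f) = hunit D (vcod D f)"
  "cleft D (cunit D f) = f" "cright D (cunit D f) = f"
  using cunit_cell by (auto simp: is_cell_def)

lemma lun_bd[simp]: "csrc D (lunitor D J) = hcomp D (hunit D (hsrc D J)) J" "ctgt D (lunitor D J) = J"
  "cleft D (lunitor D J) = vid D (hsrc D J)" "cright D (lunitor D J) = vid D (htgt D J)"
  using lunitor_cell by (auto simp: is_cell_def)

lemma run_bd[simp]: "csrc D (runitor D J) = hcomp D J (hunit D (htgt D J))" "ctgt D (runitor D J) = J"
  "cleft D (runitor D J) = vid D (hsrc D J)" "cright D (runitor D J) = vid D (htgt D J)"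
  using runitor_cell by (auto simp: is_cell_def)

lemma as_bd[simp]:
  assumes "htgt D J = hsrc D H" "htgt D H = hsrc D K"
  shows "csrc D (assoc D J H K) = hcomp D (hcomp D J H) K"
    "ctgt D (assoc D J H K) = hcomp D J (hcomp D H K)"
    "cleft D (assoc D J H K) = vid D (hsrc D J)" "cright D (assoc D J H K) = vid D (htgt D K)"
  using assoc_cell[OF assms] by (auto simp: is_cell_def)

lemma vidl[simp]: "vcod D f = A \<Longrightarrow> vcomp D (vid D A) f = f"
  using vcomp_idl by auto
lemma vidr[simp]: "vdom D f = A \<Longrightarrow> vcomp D f (vid D A) = f"
  using vcomp_idr by auto

lemmas bdry = cell_bdry

lemma bd1[simp]: "hsrc D (csrc D \<phi>) = vdom D (cleft D \<phi>)" using cell_bdry by blast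
lemma bd2[simp]: "htgt D (csrc D \<phi>) = vdom D (cright D \<phi>)" using cell_bdry by blast
lemma bd3[simp]: "hsrc D (ctgt D \<phi>) = vcod D (cleft D \<phi>)" using cell_bdry by blast
lemma bd4[simp]: "htgt D (ctgt D \<phi>) = vcod D (cright D \<phi>)" using cell_bdry by blast

declare vid_dom[simp] vid_cod[simp] hunit_src[simp] hunit_tgt[simp]
declare vcomp_dom[simp] vcomp_cod[simp] hcomp_src[simp] hcomp_tgt[simp]

lemma cancel_r:
  assumes "iso_cell D u" "csrc D x = ctgt D u" "csrc D y = ctgt D u" "x \<cdot> u = y \<cdot> u"
  shows "x = y"
proof -
  obtain v where v: "csrc D v = ctgt D u" "ctgt D v = csrc D u" "v \<cdot> u = cid D (csrc D u)"
    "u \<cdot> v = cid D (ctgt D u)" using assms(1) unfolding iso_cell_def by blast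
  have "x = x \<cdot> (u \<cdot> v)" using ccomp_idr[of x] v assms by simp
  also have "\<dots> = (x \<cdot> u) \<cdot> v" using ccomp_assoc[of v u x] v assms by simp
  also have "\<dots> = (y \<cdot> u) \<cdot> v" using assms by simp
  also have "\<dots> = y \<cdot> (u \<cdot> v)" using ccomp_assoc[of v u y] v assms by simp
  also have "\<dots> = y" using ccomp_idr[of y] v assms by simp
  finally show ?thesis .
qed

lemma cancel_l:
  assumes "iso_cell D u" "ctgt D x = csrc D u" "ctgt D y = csrc D u" "u \<cdot> x = u \<cdot> y"
  shows "x = y"
proof -
  obtain v where v: "csrc D v = ctgt D u" "ctgt D v = csrc D u" "v \<cdot> u = cid D (csrc D u)"
    "u \<cdot> v = cid D (ctgt D u)" using assms(1) unfolding iso_cell_def by blast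
  have "x = (v \<cdot> u) \<cdot> x" using ccomp_idl[of x] v assms by simp
  also have "\<dots> = v \<cdot> (u \<cdot> x)" using ccomp_assoc[of x u v] v assms by simp
  also have "\<dots> = v \<cdot> (u \<cdot> y)" using assms by simp
  also have "\<dots> = (v \<cdot> u) \<cdot> y" using ccomp_assoc[of y u v] v assms by simp
  also have "\<dots> = y" using ccomp_idl[of y] v assms by simp
  finally show ?thesis .
qed

lemma glob_inv:
  assumes "iso_cell D u" "cleft D u = vid D X" "cright D u = vid D Y"
  shows "\<exists>v. csrc D v = ctgt D u \<and> ctgt D v = csrc D u \<and> v \<cdot> u = cid D (csrc D u) \<and>
     u \<cdot> v = cid D (ctgt D u) \<and> cleft D v = vid D X \<and> cright D v = vid D Y"
proof -
  obtain v where v: "csrc D v = ctgt D u" "ctgt D v = csrc D u" "v \<cdot> u = cid D (csrc D u)"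
    "u \<cdot> v = cid D (ctgt D u)" using assms(1) unfolding iso_cell_def by blast
  have d1: "vdom D (cleft D v) = X"
    using v assms bd1[of v] bd3[of u] by simp
  have "cleft D (v \<cdot> u) = vid D X" using v assms by simp
  moreover have "cleft D (v \<cdot> u) = vcomp D (cleft D v) (vid D X)" using v(1)[symmetric] assms by simp
  ultimately have l: "cleft D v = vid D X"
    using d1 by simp
  have d2: "vdom D (cright D v) = Y"
    using v assms bd2[of v] bd4[of u] by simp
  have "cright D (v \<cdot> u) = vid D Y" using v assms by simp
  moreover have "cright D (v \<cdot> u) = vcomp D (cright D v) (vid D Y)" using v(1)[symmetric] assms by simp
  ultimately have r: "cright D v = vid D Y"
    using d2 by simp
  show ?thesis using v l r by blast
qed

lemma iso_cid: "iso_cell D (cid D J)"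
  unfolding iso_cell_def using ccomp_idl[of "cid D J"] by (intro exI[of _ "cid D J"]) simp

lemma iso_comp:
  assumes "iso_cell D u" "iso_cell D w" "ctgt D u = csrc D w"
  shows "iso_cell D (w \<cdot> u)"
proof -
  obtain v where v: "csrc D v = ctgt D u" "ctgt D v = csrc D u" "v \<cdot> u = cid D (csrc D u)"
    "u \<cdot> v = cid D (ctgt D u)" using assms(1) unfolding iso_cell_def by blast
  obtain v' where v': "csrc D v' = ctgt D w" "ctgt D v' = csrc D w" "v' \<cdot> w = cid D (csrc D w)"
    "w \<cdot> v' = cid D (ctgt D w)" using assms(2) unfolding iso_cell_def by blast
  have "(v \<cdot> v') \<cdot> (w \<cdot> u) = ((v \<cdot> v') \<cdot> w) \<cdot> u"
    using v(1,2) v'(1,2) assms ccomp_assoc[of u w "v \<cdot> v'"] by simp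
  also have "(v \<cdot> v') \<cdot> w = v \<cdot> (v' \<cdot> w)"
    using v(1,2) v'(1,2) assms ccomp_assoc[of w v' v] by simp
  also have "(v \<cdot> (v' \<cdot> w)) \<cdot> u = cid D (csrc D u)" using v v' assms ccomp_idr[of v] by simp
  finally have 1: "(v \<cdot> v') \<cdot> (w \<cdot> u) = cid D (csrc D (w \<cdot> u))" using assms by simp
  have "(w \<cdot> u) \<cdot> (v \<cdot> v') = w \<cdot> (u \<cdot> (v \<cdot> v'))"
    using v(1,2) v'(1,2) assms ccomp_assoc[of "v \<cdot> v'" u w] by simp
  also have "u \<cdot> (v \<cdot> v') = (u \<cdot> v) \<cdot> v'"
    using v(1,2) v'(1,2) assms ccomp_assoc[of v' v u] by simp
  also have "w \<cdot> ((u \<cdot> v) \<cdot> v') = cid D (ctgt D w)" using v v' assms ccomp_idl[of v'] by simp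
  finally have 2: "(w \<cdot> u) \<cdot> (v \<cdot> v') = cid D (ctgt D (w \<cdot> u))" using assms by simp
  show ?thesis unfolding iso_cell_def using 1 2 v v' assms
    by (intro exI[of _ "v \<cdot> v'"]) simp
qed

lemma iso_hc:
  assumes "iso_cell D u" "iso_cell D w" "cleft D u = vid D X" "cright D u = vid D Y"
    "cleft D w = vid D Y" "cright D w = vid D Z"
  shows "iso_cell D (u \<odot> w)"
proof -
  obtain v where v: "csrc D v = ctgt D u" "ctgt D v = csrc D u" "v \<cdot> u = cid D (csrc D u)"
    "u \<cdot> v = cid D (ctgt D u)" "cleft D v = vid D X" "cright D v = vid D Y"
    using glob_inv[OF assms(1,3,4)] by blast
  obtain v' where v': "csrc D v' = ctgt D w" "ctgt D v' = csrc D w" "v' \<cdot> w = cid D (csrc D w)"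
    "w \<cdot> v' = cid D (ctgt D w)" "cleft D v' = vid D Y" "cright D v' = vid D Z"
    using glob_inv[OF assms(2,5,6)] by blast
  have 1: "(v \<odot> v') \<cdot> (u \<odot> w) = cid D (csrc D (u \<odot> w))"
    using interchange[of u v w v'] v v' assms chcomp_id[of "csrc D u" "csrc D w"] by simp
  have 2: "(u \<odot> w) \<cdot> (v \<odot> v') = cid D (ctgt D (u \<odot> w))"
    using interchange[of v u v' w] v v' assms chcomp_id[of "ctgt D u" "ctgt D w"] by simp
  show ?thesis unfolding iso_cell_def using 1 2 v v' assms
    by (intro exI[of _ "v \<odot> v'"]) simp
qed

lemma faith:
  assumes "cleft D f = vid D A" "cleft D g = vid D A" "csrc D f = csrc D g" "ctgt D f = ctgt D g"
    "cid D (hunit D A) \<odot> f = cid D (hunit D A) \<odot> g"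
  shows "f = g"
proof -
  have "f \<cdot> lunitor D (csrc D f) = g \<cdot> lunitor D (csrc D f)"
    using lunitor_nat[of f] lunitor_nat[of g] assms cunit_id[of A] by simp
  thus ?thesis using cancel_r[OF lunitor_iso] assms by simp
qed

lemma lamII: "lunitor D (hcomp D (hunit D m) (hunit D m)) = cid D (hunit D m) \<odot> lunitor D (hunit D m)"
proof -
  have "lunitor D (hunit D m) \<cdot> (cid D (hunit D m) \<odot> lunitor D (hunit D m))
     = lunitor D (hunit D m) \<cdot> lunitor D (hcomp D (hunit D m) (hunit D m))"
    using lunitor_nat[of "lunitor D (hunit D m)"] cunit_id[of m] by simp
  from this[symmetric] show ?thesis by (rule cancel_l[OF lunitor_iso[of "hunit D m"], rotated -1]) simp_all
qed

lemma a_prime: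
  "lunitor D (hcomp D (hunit D m) (hunit D m)) \<cdot> assoc D (hunit D m) (hunit D m) (hunit D m)
   = lunitor D (hunit D m) \<odot> cid D (hunit D m)"
proof -
  let ?I = "hunit D m"
  let ?II = "hcomp D ?I ?I"
  let ?a = "assoc D ?I ?I ?I"
  let ?one = "cid D ?I"
  let ?l = "lunitor D ?I"
  let ?r = "runitor D ?I"
  let ?lII = "lunitor D ?II"
  let ?b = "assoc D ?I ?II ?I"
  let ?c = "?a \<odot> ?one"
  have P: "assoc D ?I ?I ?II \<cdot> assoc D ?II ?I ?I = (?one \<odot> ?a) \<cdot> (?b \<cdot> ?c)"
    using pentagon[of ?I ?I ?I ?I] by simp
  have T1: "(?one \<odot> ?lII) \<cdot> assoc D ?I ?I ?II = ?r \<odot> cid D ?II"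
    using triangle[of ?I ?II] by simp
  have T2: "(?one \<odot> ?l) \<cdot> ?a = ?r \<odot> ?one"
    using triangle[of ?I ?I] by simp
  have N1: "?a \<cdot> ((?r \<odot> ?one) \<odot> ?one) = (?r \<odot> cid D ?II) \<cdot> assoc D ?II ?I ?I"
    using assoc_nat[of ?r ?one ?one] chcomp_id[of ?I ?I] by simp
  have N2: "?a \<cdot> ((?one \<odot> ?l) \<odot> ?one) = (?one \<odot> (?l \<odot> ?one)) \<cdot> ?b"
    using assoc_nat[of ?one ?l ?one] by simp
  have X: "((?one \<odot> ?l) \<cdot> ?a) \<odot> ?one = ((?one \<odot> ?l) \<odot> ?one) \<cdot> ?c"
    using interchange[of ?a "?one \<odot> ?l" ?one ?one] ccomp_idl[of ?one] by simp
  have "(((?one \<odot> ?lII) \<cdot> (?one \<odot> ?a)) \<cdot> ?b) \<cdot> ?c = (?one \<odot> ?lII) \<cdot> ((?one \<odot> ?a) \<cdot> (?b \<cdot> ?c))"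
    by (simp add: ccomp_assoc)
  also have "\<dots> = (?one \<odot> ?lII) \<cdot> (assoc D ?I ?I ?II \<cdot> assoc D ?II ?I ?I)" using P by simp
  also have "\<dots> = ((?one \<odot> ?lII) \<cdot> assoc D ?I ?I ?II) \<cdot> assoc D ?II ?I ?I"
    by (simp add: ccomp_assoc)
  also have "\<dots> = ?a \<cdot> ((?r \<odot> ?one) \<odot> ?one)" using T1 N1 by simp
  also have "\<dots> = ?a \<cdot> (((?one \<odot> ?l) \<odot> ?one) \<cdot> ?c)" using T2 X by simp
  also have "\<dots> = (?a \<cdot> ((?one \<odot> ?l) \<odot> ?one)) \<cdot> ?c" by (simp add: ccomp_assoc)
  also have "\<dots> = ((?one \<odot> (?l \<odot> ?one)) \<cdot> ?b) \<cdot> ?c" using N2 by simp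
  finally have E: "(((?one \<odot> ?lII) \<cdot> (?one \<odot> ?a)) \<cdot> ?b) \<cdot> ?c = ((?one \<odot> (?l \<odot> ?one)) \<cdot> ?b) \<cdot> ?c" .
  have ic: "iso_cell D ?c" by (rule iso_hc[OF assoc_iso iso_cid]) simp_all
  have E2: "((?one \<odot> ?lII) \<cdot> (?one \<odot> ?a)) \<cdot> ?b = (?one \<odot> (?l \<odot> ?one)) \<cdot> ?b"
    by (rule cancel_r[OF ic]) (use E in simp_all)
  have E3: "(?one \<odot> ?lII) \<cdot> (?one \<odot> ?a) = ?one \<odot> (?l \<odot> ?one)"
    by (rule cancel_r[OF assoc_iso[of ?I ?II ?I]]) (use E2 in simp_all)
  have E4: "(?one \<odot> ?lII) \<cdot> (?one \<odot> ?a) = ?one \<odot> (?lII \<cdot> ?a)"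
    using interchange[of ?one ?one ?a ?lII] ccomp_idl[of ?one] by simp
  show ?thesis
    by (rule faith[of _ m]) (use E3 E4 in simp_all)
qed

lemma C_coh:
  "lunitor D (hunit D m) \<odot> cid D (hunit D m) = (cid D (hunit D m) \<odot> lunitor D (hunit D m)) \<cdot> assoc D (hunit D m) (hunit D m) (hunit D m)"
  using a_prime[of m] lamII[of m] by simp

lemma lam_rho: "lunitor D (hunit D m) = runitor D (hunit D m)"
proof -
  let ?I = "hunit D m"
  have T2: "(cid D ?I \<odot> lunitor D ?I) \<cdot> assoc D ?I ?I ?I = runitor D ?I \<odot> cid D ?I"
    using triangle[of ?I ?I] by simp
  hence e: "lunitor D ?I \<odot> cid D ?I = runitor D ?I \<odot> cid D ?I" using C_coh[of m] by simp
  have "lunitor D ?I \<cdot> runitor D (hcomp D ?I ?I) = runitor D ?I \<cdot> runitor D (hcomp D ?I ?I)"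
    using runitor_nat[of "lunitor D ?I"] runitor_nat[of "runitor D ?I"] cunit_id[of m] e by simp
  thus ?thesis by (rule cancel_r[OF runitor_iso, rotated -1]) simp_all
qed

lemma G_lem:
  assumes "ctgt D \<alpha> = hunit D m" "ctgt D \<beta> = hunit D m" "ctgt D \<beta>' = hunit D m"
    "cright D \<alpha> = cleft D \<beta>" "cright D \<beta> = cleft D \<beta>'"
  shows "lunitor D (hunit D m) \<cdot> ((lunitor D (hunit D m) \<cdot> (\<alpha> \<odot> \<beta>)) \<odot> \<beta>')
    = (lunitor D (hunit D m) \<cdot> (\<alpha> \<odot> (lunitor D (hunit D m) \<cdot> (\<beta> \<odot> \<beta>'))))
       \<cdot> assoc D (csrc D \<alpha>) (csrc D \<beta>) (csrc D \<beta>')"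
proof -
  let ?I = "hunit D m"
  let ?l = "lunitor D ?I"
  let ?one = "cid D ?I"
  let ?a = "assoc D ?I ?I ?I"
  let ?X = "(\<alpha> \<odot> \<beta>) \<odot> \<beta>'"
  have s1: "(?l \<cdot> (\<alpha> \<odot> \<beta>)) \<odot> \<beta>' = (?l \<odot> ?one) \<cdot> ?X"
    using interchange[of "\<alpha> \<odot> \<beta>" ?l \<beta>' ?one] ccomp_idl[of \<beta>'] assms by simp
  have s3: "?a \<cdot> ?X = (\<alpha> \<odot> (\<beta> \<odot> \<beta>')) \<cdot> assoc D (csrc D \<alpha>) (csrc D \<beta>) (csrc D \<beta>')"
    using assoc_nat[of \<alpha> \<beta> \<beta>'] assms by simp
  have s4: "(?one \<odot> ?l) \<cdot> (\<alpha> \<odot> (\<beta> \<odot> \<beta>')) = \<alpha> \<odot> (?l \<cdot> (\<beta> \<odot> \<beta>'))"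
    using interchange[of \<alpha> ?one "\<beta> \<odot> \<beta>'" ?l] ccomp_idl[of \<alpha>] assms by simp
  have "?l \<cdot> ((?l \<cdot> (\<alpha> \<odot> \<beta>)) \<odot> \<beta>') = ?l \<cdot> (((?one \<odot> ?l) \<cdot> ?a) \<cdot> ?X)"
    using s1 C_coh[of m] by simp
  also have "\<dots> = (?l \<cdot> (?one \<odot> ?l)) \<cdot> (?a \<cdot> ?X)"
    using assms by (simp add: ccomp_assoc)
  also have "\<dots> = (?l \<cdot> (?one \<odot> ?l)) \<cdot> ((\<alpha> \<odot> (\<beta> \<odot> \<beta>')) \<cdot> assoc D (csrc D \<alpha>) (csrc D \<beta>) (csrc D \<beta>'))"
    using s3 by simp
  also have "\<dots> = (?l \<cdot> ((?one \<odot> ?l) \<cdot> (\<alpha> \<odot> (\<beta> \<odot> \<beta>')))) \<cdot> assoc D (csrc D \<alpha>) (csrc D \<beta>) (csrc D \<beta>')"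
    using assms by (simp add: ccomp_assoc)
  also have "\<dots> = (?l \<cdot> (\<alpha> \<odot> (?l \<cdot> (\<beta> \<odot> \<beta>')))) \<cdot> assoc D (csrc D \<alpha>) (csrc D \<beta>) (csrc D \<beta>')"
    using s4 by simp
  finally show ?thesis .
qed

lemma R_lem:
  assumes "ctgt D \<alpha> = hunit D m" "ctgt D \<beta> = hunit D m" "cright D \<alpha> = cleft D \<beta>"
    "csrc D \<beta> = K" "ctgt D \<gamma> = csrc D \<alpha>" "cright D \<gamma> = vid D (hsrc D K)"
  shows "(lunitor D (hunit D m) \<cdot> (\<alpha> \<odot> \<beta>)) \<cdot> (\<gamma> \<odot> cid D K)
     = lunitor D (hunit D m) \<cdot> ((\<alpha> \<cdot> \<gamma>) \<odot> \<beta>)"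
proof -
  have "(\<alpha> \<cdot> \<gamma>) \<odot> \<beta> = (\<alpha> \<odot> \<beta>) \<cdot> (\<gamma> \<odot> cid D K)"
    using interchange[of \<gamma> \<alpha> "cid D K" \<beta>] ccomp_idr[of \<beta>] assms by simp
  thus ?thesis using assms ccomp_assoc[of "\<gamma> \<odot> cid D K" "\<alpha> \<odot> \<beta>" "lunitor D (hunit D m)"] by simp
qed

lemma W_lem:
  assumes "csrc D \<zeta>1 = J" "ctgt D \<zeta>1 = hunit D m" "csrc D \<zeta>2 = J" "ctgt D \<zeta>2 = hunit D m"
    "cright D \<zeta>2 = cleft D \<nu>" "csrc D \<nu> = hunit D (htgt D J)" "ctgt D \<nu> = hunit D m"
    "\<zeta>1 \<cdot> runitor D J = lunitor D (hunit D m) \<cdot> (\<zeta>2 \<odot> \<nu>)"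
    "ctgt D \<chi> = J" "cright D \<chi> = k" "vcod D k = htgt D J"
  shows "(\<zeta>1 \<cdot> \<chi>) \<cdot> runitor D (csrc D \<chi>) = lunitor D (hunit D m) \<cdot> ((\<zeta>2 \<cdot> \<chi>) \<odot> (\<nu> \<cdot> cunit D k))"
proof -
  have n: "\<chi> \<cdot> runitor D (csrc D \<chi>) = runitor D J \<cdot> (\<chi> \<odot> cunit D k)"
    using runitor_nat[of \<chi>] assms by simp
  have "(\<zeta>1 \<cdot> \<chi>) \<cdot> runitor D (csrc D \<chi>) = \<zeta>1 \<cdot> (\<chi> \<cdot> runitor D (csrc D \<chi>))"
    using assms ccomp_assoc[of "runitor D (csrc D \<chi>)" \<chi> \<zeta>1] by simp
  also have "\<dots> = (\<zeta>1 \<cdot> runitor D J) \<cdot> (\<chi> \<odot> cunit D k)"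
    using n assms ccomp_assoc[of "\<chi> \<odot> cunit D k" "runitor D J" \<zeta>1] by simp
  also have "\<dots> = lunitor D (hunit D m) \<cdot> ((\<zeta>2 \<odot> \<nu>) \<cdot> (\<chi> \<odot> cunit D k))"
    using assms ccomp_assoc[of "\<chi> \<odot> cunit D k" "\<zeta>2 \<odot> \<nu>" "lunitor D (hunit D m)"] by simp
  also have "(\<zeta>2 \<odot> \<nu>) \<cdot> (\<chi> \<odot> cunit D k) = (\<zeta>2 \<cdot> \<chi>) \<odot> (\<nu> \<cdot> cunit D k)"
    using interchange[of \<chi> \<zeta>2 "cunit D k" \<nu>] assms by simp
  finally show ?thesis .
qed

lemma key_lem:
  assumes e: "is_cell D \<eta> J (hunit D m) y l" and p: "is_cell D \<phi> J (hunit D m) y g"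
    and n2: "is_cell D \<nu>2 (hunit D (htgt D J)) (hunit D m) l g"
    and n1: "is_cell D \<nu>1 (hunit D (htgt D J)) (hunit D m) g l"
    and e2: "\<phi> \<cdot> runitor D J = lunitor D (hunit D m) \<cdot> (\<eta> \<odot> \<nu>2)"
    and e1: "\<eta> \<cdot> runitor D J = lunitor D (hunit D m) \<cdot> (\<phi> \<odot> \<nu>1)"
    and u: "\<And>a b. is_cell D a (hunit D (htgt D J)) (hunit D m) l l \<Longrightarrow>
              \<eta> \<cdot> runitor D J = lunitor D (hunit D m) \<cdot> (\<eta> \<odot> a) \<Longrightarrow>
              is_cell D b (hunit D (htgt D J)) (hunit D m) l l \<Longrightarrow>
              \<eta> \<cdot> runitor D J = lunitor D (hunit D m) \<cdot> (\<eta> \<odot> b) \<Longrightarrow> a = b"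
    and vl: "vdom D l = htgt D J" "vcod D l = m"
  shows "lunitor D (hunit D m) \<cdot> (\<nu>2 \<odot> \<nu>1) = cunit D l \<cdot> lunitor D (hunit D (htgt D J))"
proof -
  let ?I = "hunit D m"
  let ?U = "hunit D (htgt D J)"
  let ?lam = "lunitor D ?I"
  let ?lU = "lunitor D ?U"
  let ?r = "runitor D J"
  let ?Q = "?lam \<cdot> (\<nu>2 \<odot> \<nu>1)"
  note c = e[unfolded is_cell_def] p[unfolded is_cell_def] n2[unfolded is_cell_def] n1[unfolded is_cell_def] vl
  have s1: "(\<eta> \<cdot> ?r) \<cdot> (?r \<odot> cid D ?U) = (?lam \<cdot> (\<eta> \<odot> ?Q)) \<cdot> assoc D J ?U ?U"
  proof -
    have "(\<eta> \<cdot> ?r) \<cdot> (?r \<odot> cid D ?U) = ?lam \<cdot> ((\<phi> \<cdot> ?r) \<odot> \<nu>1)"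
      unfolding e1 by (rule R_lem) (use c vl in simp_all)
    also have "\<dots> = ?lam \<cdot> ((?lam \<cdot> (\<eta> \<odot> \<nu>2)) \<odot> \<nu>1)" using e2 by simp
    also have "\<dots> = (?lam \<cdot> (\<eta> \<odot> ?Q)) \<cdot> assoc D (csrc D \<eta>) (csrc D \<nu>2) (csrc D \<nu>1)"
      by (rule G_lem) (use c in simp_all)
    finally show ?thesis using c by simp
  qed
  have s2: "(\<eta> \<cdot> ?r) \<cdot> (?r \<odot> cid D ?U) = ((\<eta> \<cdot> ?r) \<cdot> (cid D J \<odot> ?lU)) \<cdot> assoc D J ?U ?U"
    using triangle[of J ?U] ccomp_assoc[of "assoc D J ?U ?U" "cid D J \<odot> ?lU" "\<eta> \<cdot> ?r"] c by simp
  have s3: "(\<eta> \<cdot> ?r) \<cdot> (cid D J \<odot> ?lU) = ?lam \<cdot> (\<eta> \<odot> ?Q)"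
    by (rule cancel_r[OF assoc_iso[of J ?U ?U]]) (use s1 s2 c vl in simp_all)
  obtain v where v: "csrc D v = ?U" "ctgt D v = hcomp D ?U ?U" "v \<cdot> ?lU = cid D (hcomp D ?U ?U)"
    "?lU \<cdot> v = cid D ?U" "cleft D v = vid D (htgt D J)" "cright D v = vid D (htgt D J)"
    using glob_inv[OF lunitor_iso, of ?U "htgt D J" "htgt D J"] by auto
  have cu: "is_cell D (cunit D l) ?U ?I l l" using vl unfolding is_cell_def by simp
  have cuE: "\<eta> \<cdot> ?r = ?lam \<cdot> (\<eta> \<odot> cunit D l)"
    using runitor_nat[of \<eta>] lam_rho[of m] c by simp
  have Qv: "is_cell D (?Q \<cdot> v) ?U ?I l l" using c v vl unfolding is_cell_def by simp
  have QvE: "\<eta> \<cdot> ?r = ?lam \<cdot> (\<eta> \<odot> (?Q \<cdot> v))"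
  proof -
    have i1: "\<eta> \<odot> (?Q \<cdot> v) = (\<eta> \<odot> ?Q) \<cdot> (cid D J \<odot> v)"
      using interchange[of "cid D J" \<eta> v ?Q] ccomp_idr[of \<eta>] c v by simp
    have i2: "(cid D J \<odot> ?lU) \<cdot> (cid D J \<odot> v) = cid D (hcomp D J ?U)"
      using interchange[of "cid D J" "cid D J" v ?lU] ccomp_idl[of "cid D J"] c v
        chcomp_id[of J ?U] by simp
    have "?lam \<cdot> (\<eta> \<odot> (?Q \<cdot> v)) = (?lam \<cdot> (\<eta> \<odot> ?Q)) \<cdot> (cid D J \<odot> v)"
      using i1 c v ccomp_assoc[of "cid D J \<odot> v" "\<eta> \<odot> ?Q" ?lam] by simp
    also have "\<dots> = ((\<eta> \<cdot> ?r) \<cdot> (cid D J \<odot> ?lU)) \<cdot> (cid D J \<odot> v)" using s3 by simp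
    also have "\<dots> = (\<eta> \<cdot> ?r) \<cdot> ((cid D J \<odot> ?lU) \<cdot> (cid D J \<odot> v))"
      using c v ccomp_assoc[of "cid D J \<odot> v" "cid D J \<odot> ?lU" "\<eta> \<cdot> ?r"] by simp
    also have "\<dots> = \<eta> \<cdot> ?r" using i2 ccomp_idr[of "\<eta> \<cdot> ?r"] c by simp
    finally show ?thesis by simp
  qed
  have eq: "?Q \<cdot> v = cunit D l" using u[OF Qv QvE cu cuE] .
  have "?Q = ?Q \<cdot> (v \<cdot> ?lU)" using v ccomp_idr[of ?Q] c by simp
  also have "\<dots> = (?Q \<cdot> v) \<cdot> ?lU" using v c ccomp_assoc[of ?lU v ?Q] by simp
  finally show ?thesis using eq by simp
qed

lemma cart_lem:
  assumes e: "is_cell D \<eta> J (hunit D m) y l" and p: "is_cell D \<phi> J (hunit D m) y g"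
    and cp: "cartesian D \<phi>"
    and n2: "is_cell D \<nu>2 (hunit D (htgt D J)) (hunit D m) l g"
    and n1: "is_cell D \<nu>1 (hunit D (htgt D J)) (hunit D m) g l"
    and e2: "\<phi> \<cdot> runitor D J = lunitor D (hunit D m) \<cdot> (\<eta> \<odot> \<nu>2)"
    and e1: "\<eta> \<cdot> runitor D J = lunitor D (hunit D m) \<cdot> (\<phi> \<odot> \<nu>1)"
    and key: "lunitor D (hunit D m) \<cdot> (\<nu>2 \<odot> \<nu>1) = cunit D l \<cdot> lunitor D (hunit D (htgt D J))"
    and vl: "vdom D l = htgt D J" "vcod D l = m" "vdom D g = htgt D J" "vcod D g = m" "vcod D y = m"
  shows "cartesian D \<eta>"
  unfolding cartesian_def
proof (intro allI impI)
  note c = e[unfolded is_cell_def] p[unfolded is_cell_def] n2[unfolded is_cell_def] n1[unfolded is_cell_def] vl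
  let ?I = "hunit D m"
  let ?lam = "lunitor D ?I"
  fix \<psi> h k
  assume "vcod D h = vdom D (cleft D \<eta>) \<and> vcod D k = vdom D (cright D \<eta>) \<and> ctgt D \<psi> = ctgt D \<eta> \<and>
       cleft D \<psi> = vcomp D (cleft D \<eta>) h \<and> cright D \<psi> = vcomp D (cright D \<eta>) k"
  hence a: "vcod D h = vdom D y" "vcod D k = htgt D J" "ctgt D \<psi> = ?I" "cleft D \<psi> = vcomp D y h"
    "cright D \<psi> = vcomp D l k" using c by auto
  let ?H = "csrc D \<psi>"
  let ?U = "hunit D (vdom D k)"
  let ?rH = "runitor D ?H"
  have hH: "hsrc D ?H = vdom D h" "htgt D ?H = vdom D k" using a c by simp_all
  have uniq: "\<chi>1 = \<chi>2" if "is_cell D \<chi>1 ?H J h k" "is_cell D \<chi>2 ?H J h k" "\<eta> \<cdot> \<chi>1 = \<eta> \<cdot> \<chi>2"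
    for \<chi>1 \<chi>2
  proof -
    have w1: "(\<phi> \<cdot> \<chi>1) \<cdot> ?rH = ?lam \<cdot> ((\<eta> \<cdot> \<chi>1) \<odot> (\<nu>2 \<cdot> cunit D k))"
      using W_lem[of \<phi> J m \<eta> \<nu>2 \<chi>1 k] c e2 a that(1) unfolding is_cell_def by simp
    have w2: "(\<phi> \<cdot> \<chi>2) \<cdot> ?rH = ?lam \<cdot> ((\<eta> \<cdot> \<chi>2) \<odot> (\<nu>2 \<cdot> cunit D k))"
      using W_lem[of \<phi> J m \<eta> \<nu>2 \<chi>2 k] c e2 a that(2) unfolding is_cell_def by simp
    have "\<phi> \<cdot> \<chi>1 = \<phi> \<cdot> \<chi>2"
      by (rule cancel_r[OF runitor_iso[of ?H]]) (use w1 w2 that c in \<open>simp_all add: is_cell_def\<close>)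
    moreover have "\<exists>!\<chi>. is_cell D \<chi> (csrc D (\<phi> \<cdot> \<chi>1)) (csrc D \<phi>) h k \<and> \<phi> \<cdot> \<chi> = \<phi> \<cdot> \<chi>1"
      using cp[unfolded cartesian_def, rule_format, of h k "\<phi> \<cdot> \<chi>1"] that(1) c a
      unfolding is_cell_def by simp
    ultimately show ?thesis using that c unfolding is_cell_def by auto
  qed
  let ?nbk = "\<nu>2 \<cdot> cunit D k"
  let ?nak = "\<nu>1 \<cdot> cunit D k"
  let ?tz = "?lam \<cdot> (\<psi> \<odot> ?nbk)"
  obtain ri where ri: "csrc D ri = ?H" "ctgt D ri = hcomp D ?H ?U" "ri \<cdot> ?rH = cid D (hcomp D ?H ?U)"
    "?rH \<cdot> ri = cid D ?H" "cleft D ri = vid D (vdom D h)" "cright D ri = vid D (vdom D k)"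
    using glob_inv[OF runitor_iso, of ?H "vdom D h" "vdom D k"] a c by auto
  let ?t = "?tz \<cdot> ri"
  have t_cell: "ctgt D ?t = ?I" "cleft D ?t = vcomp D y h" "cright D ?t = vcomp D g k" "csrc D ?t = ?H"
    using a c ri by simp_all
  obtain \<chi> where \<chi>: "is_cell D \<chi> ?H J h k" "\<phi> \<cdot> \<chi> = ?t"
    using cp[unfolded cartesian_def, rule_format, of h k ?t] t_cell a c by auto
  note \<chi>c = \<chi>(1)[unfolded is_cell_def]
  have A: "(\<eta> \<cdot> \<chi>) \<cdot> ?rH = ?lam \<cdot> (?t \<odot> ?nak)"
    using W_lem[of \<eta> J m \<phi> \<nu>1 \<chi> k] c e1 a \<chi>c \<chi>(2) by simp
  have tr: "?t \<cdot> ?rH = ?tz"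
  proof -
    have "?t \<cdot> ?rH = ?tz \<cdot> (ri \<cdot> ?rH)" using ri(1,2,5,6) a c ccomp_assoc[of ?rH ri ?tz] by simp
    also have "\<dots> = ?tz" using ri a c ccomp_idr[of ?tz] by simp
    finally show ?thesis .
  qed
  have B: "(?lam \<cdot> (?t \<odot> ?nak)) \<cdot> (?rH \<odot> cid D ?U) = ?lam \<cdot> (?tz \<odot> ?nak)"
    using R_lem[of ?t m ?nak ?U ?rH] tr t_cell a c by simp
  have C: "?lam \<cdot> (?tz \<odot> ?nak) = (?lam \<cdot> (\<psi> \<odot> (?lam \<cdot> (?nbk \<odot> ?nak)))) \<cdot> assoc D ?H ?U ?U"
    using G_lem[of \<psi> m ?nbk ?nak] a c by simp
  have D1: "?lam \<cdot> (?nbk \<odot> ?nak) = cunit D (vcomp D l k) \<cdot> lunitor D ?U"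
  proof -
    have "?nbk \<odot> ?nak = (\<nu>2 \<odot> \<nu>1) \<cdot> (cunit D k \<odot> cunit D k)"
      using interchange[of "cunit D k" \<nu>2 "cunit D k" \<nu>1] a c by simp
    hence "?lam \<cdot> (?nbk \<odot> ?nak) = (?lam \<cdot> (\<nu>2 \<odot> \<nu>1)) \<cdot> (cunit D k \<odot> cunit D k)"
      using a c ccomp_assoc[of "cunit D k \<odot> cunit D k" "\<nu>2 \<odot> \<nu>1" ?lam] by simp
    also have "\<dots> = (cunit D l \<cdot> lunitor D (hunit D (htgt D J))) \<cdot> (cunit D k \<odot> cunit D k)"
      using key by simp
    also have "\<dots> = cunit D l \<cdot> (lunitor D (hunit D (htgt D J)) \<cdot> (cunit D k \<odot> cunit D k))"
      using a c ccomp_assoc[of "cunit D k \<odot> cunit D k" "lunitor D (hunit D (htgt D J))" "cunit D l"]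
      by simp
    also have "lunitor D (hunit D (htgt D J)) \<cdot> (cunit D k \<odot> cunit D k) = cunit D k \<cdot> lunitor D ?U"
      using lunitor_nat[of "cunit D k"] a by simp
    also have "cunit D l \<cdot> (cunit D k \<cdot> lunitor D ?U) = (cunit D l \<cdot> cunit D k) \<cdot> lunitor D ?U"
      using a c ccomp_assoc[of "lunitor D ?U" "cunit D k" "cunit D l"] by simp
    also have "cunit D l \<cdot> cunit D k = cunit D (vcomp D l k)"
      using cunit_comp[of k l] a c by simp
    finally show ?thesis .
  qed
  have E: "?lam \<cdot> (\<psi> \<odot> (cunit D (vcomp D l k) \<cdot> lunitor D ?U)) = (\<psi> \<cdot> ?rH) \<cdot> (cid D ?H \<odot> lunitor D ?U)"
  proof -
    have "\<psi> \<odot> (cunit D (vcomp D l k) \<cdot> lunitor D ?U) = (\<psi> \<odot> cunit D (vcomp D l k)) \<cdot> (cid D ?H \<odot> lunitor D ?U)"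
      using interchange[of "cid D ?H" \<psi> "lunitor D ?U" "cunit D (vcomp D l k)"] ccomp_idr[of \<psi>] a c
      by simp
    hence "?lam \<cdot> (\<psi> \<odot> (cunit D (vcomp D l k) \<cdot> lunitor D ?U)) =
        (?lam \<cdot> (\<psi> \<odot> cunit D (vcomp D l k))) \<cdot> (cid D ?H \<odot> lunitor D ?U)"
      using a c ccomp_assoc[of "cid D ?H \<odot> lunitor D ?U" "\<psi> \<odot> cunit D (vcomp D l k)" ?lam] by simp
    also have "?lam \<cdot> (\<psi> \<odot> cunit D (vcomp D l k)) = \<psi> \<cdot> ?rH"
      using runitor_nat[of \<psi>] lam_rho[of m] a by simp
    finally show ?thesis .
  qed
  have F: "(cid D ?H \<odot> lunitor D ?U) \<cdot> assoc D ?H ?U ?U = ?rH \<odot> cid D ?U"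
    using triangle[of ?H ?U] a c by simp
  have "((\<eta> \<cdot> \<chi>) \<cdot> ?rH) \<cdot> (?rH \<odot> cid D ?U) = ((\<psi> \<cdot> ?rH) \<cdot> (cid D ?H \<odot> lunitor D ?U)) \<cdot> assoc D ?H ?U ?U"
    using A B C D1 E by simp
  also have "\<dots> = (\<psi> \<cdot> ?rH) \<cdot> (?rH \<odot> cid D ?U)"
    using F a c ccomp_assoc[of "assoc D ?H ?U ?U" "cid D ?H \<odot> lunitor D ?U" "\<psi> \<cdot> ?rH"] by simp
  finally have fin: "((\<eta> \<cdot> \<chi>) \<cdot> ?rH) \<cdot> (?rH \<odot> cid D ?U) = (\<psi> \<cdot> ?rH) \<cdot> (?rH \<odot> cid D ?U)" .
  have iso2: "iso_cell D (?rH \<odot> cid D ?U)"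
    by (rule iso_hc[OF runitor_iso iso_cid]) (use a c in simp_all)
  have f2: "(\<eta> \<cdot> \<chi>) \<cdot> ?rH = \<psi> \<cdot> ?rH"
    by (rule cancel_r[OF iso2]) (use fin a c \<chi>c in simp_all)
  have ex: "\<eta> \<cdot> \<chi> = \<psi>"
    by (rule cancel_r[OF runitor_iso[of ?H]]) (use f2 a c \<chi>c in simp_all)
  show "\<exists>!\<chi>. is_cell D \<chi> (csrc D \<psi>) (csrc D \<eta>) h k \<and> \<eta> \<cdot> \<chi> = \<psi>"
  proof (rule ex1I[of _ \<chi>])
    show "is_cell D \<chi> (csrc D \<psi>) (csrc D \<eta>) h k \<and> \<eta> \<cdot> \<chi> = \<psi>" using \<chi>(1) ex c by simp
  next
    fix \<chi>' assume "is_cell D \<chi>' (csrc D \<psi>) (csrc D \<eta>) h k \<and> \<eta> \<cdot> \<chi>' = \<psi>"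
    thus "\<chi>' = \<chi>" using uniq[of \<chi>' \<chi>] \<chi>(1) ex c by simp
  qed
qed

lemma T_lem:
  assumes "csrc D \<zeta>1 = J" "ctgt D \<zeta>1 = hunit D m" "csrc D \<zeta>2 = J" "ctgt D \<zeta>2 = hunit D m"
    "cright D \<zeta>2 = cleft D \<nu>" "csrc D \<nu> = hunit D (htgt D J)" "ctgt D \<nu> = hunit D m"
    "cright D \<nu> = cright D \<zeta>1"
    "\<zeta>1 \<cdot> runitor D J = lunitor D (hunit D m) \<cdot> (\<zeta>2 \<odot> \<nu>)"
    "csrc D \<psi> = H" "ctgt D \<psi> = hunit D m" "cleft D \<psi> = cright D \<zeta>1" "hsrc D H = htgt D J"
    "csrc D v = H" "ctgt D v = hcomp D (hunit D (htgt D J)) H" "lunitor D H \<cdot> v = cid D H"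
    "cleft D v = vid D (htgt D J)" "cright D v = vid D (htgt D H)"
  shows "lunitor D (hunit D m) \<cdot> (\<zeta>1 \<odot> \<psi>)
     = lunitor D (hunit D m) \<cdot> (\<zeta>2 \<odot> ((lunitor D (hunit D m) \<cdot> (\<nu> \<odot> \<psi>)) \<cdot> v))"
proof -
  let ?lam = "lunitor D (hunit D m)"
  let ?U = "hunit D (htgt D J)"
  let ?Q = "?lam \<cdot> (\<nu> \<odot> \<psi>)"
  have m1: "vcod D (cleft D \<nu>) = m" using bd3[of \<nu>] assms by simp
  have m2: "vcod D (cright D \<psi>) = m" using bd4[of \<psi>] assms by simp
  note c = assms m1 m2
  have t1: "(?lam \<cdot> (\<zeta>1 \<odot> \<psi>)) \<cdot> (runitor D J \<odot> cid D H) = ?lam \<cdot> ((\<zeta>1 \<cdot> runitor D J) \<odot> \<psi>)"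
    by (rule R_lem) (use c in simp_all)
  have t2: "?lam \<cdot> ((?lam \<cdot> (\<zeta>2 \<odot> \<nu>)) \<odot> \<psi>) = (?lam \<cdot> (\<zeta>2 \<odot> ?Q)) \<cdot> assoc D J ?U H"
    using G_lem[of \<zeta>2 m \<nu> \<psi>] c by simp
  have t3: "(cid D J \<odot> lunitor D H) \<cdot> assoc D J ?U H = runitor D J \<odot> cid D H"
    using triangle[of J H] c by simp
  have t4: "((?lam \<cdot> (\<zeta>1 \<odot> \<psi>)) \<cdot> (cid D J \<odot> lunitor D H)) \<cdot> assoc D J ?U H
      = (?lam \<cdot> (\<zeta>2 \<odot> ?Q)) \<cdot> assoc D J ?U H"
    using t1 t2 t3 c ccomp_assoc[of "assoc D J ?U H" "cid D J \<odot> lunitor D H" "?lam \<cdot> (\<zeta>1 \<odot> \<psi>)"]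
    by simp
  have s3: "(?lam \<cdot> (\<zeta>1 \<odot> \<psi>)) \<cdot> (cid D J \<odot> lunitor D H) = ?lam \<cdot> (\<zeta>2 \<odot> ?Q)"
    by (rule cancel_r[OF assoc_iso[of J ?U H]]) (use t4 c in simp_all)
  have i1: "\<zeta>2 \<odot> (?Q \<cdot> v) = (\<zeta>2 \<odot> ?Q) \<cdot> (cid D J \<odot> v)"
    using interchange[of "cid D J" \<zeta>2 v ?Q] ccomp_idr[of \<zeta>2] c by simp
  have i2: "(cid D J \<odot> lunitor D H) \<cdot> (cid D J \<odot> v) = cid D (hcomp D J H)"
    using interchange[of "cid D J" "cid D J" v "lunitor D H"] ccomp_idl[of "cid D J"] c
      chcomp_id[of J H] by simp
  have "?lam \<cdot> (\<zeta>2 \<odot> (?Q \<cdot> v)) = (?lam \<cdot> (\<zeta>2 \<odot> ?Q)) \<cdot> (cid D J \<odot> v)"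
    using i1 c ccomp_assoc[of "cid D J \<odot> v" "\<zeta>2 \<odot> ?Q" ?lam] by simp
  also have "\<dots> = ((?lam \<cdot> (\<zeta>1 \<odot> \<psi>)) \<cdot> (cid D J \<odot> lunitor D H)) \<cdot> (cid D J \<odot> v)" using s3 by simp
  also have "\<dots> = (?lam \<cdot> (\<zeta>1 \<odot> \<psi>)) \<cdot> ((cid D J \<odot> lunitor D H) \<cdot> (cid D J \<odot> v))"
    using c ccomp_assoc[of "cid D J \<odot> v" "cid D J \<odot> lunitor D H" "?lam \<cdot> (\<zeta>1 \<odot> \<psi>)"] by simp
  also have "\<dots> = ?lam \<cdot> (\<zeta>1 \<odot> \<psi>)" using i2 ccomp_idr[of "?lam \<cdot> (\<zeta>1 \<odot> \<psi>)"] c by simp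
  finally show ?thesis by simp
qed

lemma pw_lem:
  assumes e: "is_cell D \<eta> J (hunit D m) y l" and p: "is_cell D \<phi> J (hunit D m) y g"
    and n2: "is_cell D \<nu>2 (hunit D (htgt D J)) (hunit D m) l g"
    and n1: "is_cell D \<nu>1 (hunit D (htgt D J)) (hunit D m) g l"
    and e2: "\<phi> \<cdot> runitor D J = lunitor D (hunit D m) \<cdot> (\<eta> \<odot> \<nu>2)"
    and e1: "\<eta> \<cdot> runitor D J = lunitor D (hunit D m) \<cdot> (\<phi> \<odot> \<nu>1)"
    and key: "lunitor D (hunit D m) \<cdot> (\<nu>2 \<odot> \<nu>1) = cunit D l \<cdot> lunitor D (hunit D (htgt D J))"
    and vl: "vdom D l = htgt D J" "vcod D l = m" "vdom D g = htgt D J" "vcod D g = m" "vcod D y = m"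
    and pp: "\<forall>H \<zeta> k. hsrc D H = htgt D J \<and> is_cell D \<zeta> (hcomp D J H) (hunit D m) y k \<longrightarrow>
        (\<exists>!\<psi>. is_cell D \<psi> H (hunit D m) g k \<and> \<zeta> = lunitor D (hunit D m) \<cdot> (\<phi> \<odot> \<psi>))"
  shows "\<forall>H \<zeta> k. hsrc D H = htgt D J \<and> is_cell D \<zeta> (hcomp D J H) (hunit D m) y k \<longrightarrow>
        (\<exists>!\<psi>. is_cell D \<psi> H (hunit D m) l k \<and> \<zeta> = lunitor D (hunit D m) \<cdot> (\<eta> \<odot> \<psi>))"
proof (intro allI impI)
  note c = e[unfolded is_cell_def] p[unfolded is_cell_def] n2[unfolded is_cell_def] n1[unfolded is_cell_def] vl
  let ?I = "hunit D m"
  let ?lam = "lunitor D ?I"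
  let ?U = "hunit D (htgt D J)"
  fix H \<zeta> k
  assume a0: "hsrc D H = htgt D J \<and> is_cell D \<zeta> (hcomp D J H) ?I y k"
  hence a: "hsrc D H = htgt D J" "csrc D \<zeta> = hcomp D J H" "ctgt D \<zeta> = ?I" "cleft D \<zeta> = y"
    "cright D \<zeta> = k" unfolding is_cell_def by auto
  have vk: "vdom D k = htgt D H" "vcod D k = m"
    using bd2[of \<zeta>] bd4[of \<zeta>] a c by simp_all
  obtain v where v: "csrc D v = H" "ctgt D v = hcomp D ?U H" "v \<cdot> lunitor D H = cid D (hcomp D ?U H)"
    "lunitor D H \<cdot> v = cid D H" "cleft D v = vid D (htgt D J)" "cright D v = vid D (htgt D H)"
    using glob_inv[OF lunitor_iso, of H "htgt D J" "htgt D H"] a by auto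
  obtain \<psi>2 where p2: "is_cell D \<psi>2 H ?I g k" "\<zeta> = ?lam \<cdot> (\<phi> \<odot> \<psi>2)"
    using pp a0 by blast
  note p2c = p2(1)[unfolded is_cell_def]
  let ?S = "(?lam \<cdot> (\<nu>2 \<odot> \<psi>2)) \<cdot> v"
  have Se: "?lam \<cdot> (\<phi> \<odot> \<psi>2) = ?lam \<cdot> (\<eta> \<odot> ?S)"
    by (rule T_lem) (use c e2 p2c a v in simp_all)
  have Sc: "is_cell D ?S H ?I l k" using c p2c a v vk unfolding is_cell_def by simp
  have bk: "(\<psi> \<cdot> lunitor D H) \<cdot> (lunitor D ?U \<odot> cid D H)
      = (?lam \<cdot> (\<nu>2 \<odot> (?lam \<cdot> (\<nu>1 \<odot> \<psi>)))) \<cdot> assoc D ?U ?U H"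
    if "is_cell D \<psi> H ?I l k" for \<psi>
  proof -
    note pc = that[unfolded is_cell_def]
    have "(cunit D l \<cdot> lunitor D ?U) \<odot> \<psi> = (cunit D l \<odot> \<psi>) \<cdot> (lunitor D ?U \<odot> cid D H)"
      using interchange[of "lunitor D ?U" "cunit D l" "cid D H" \<psi>] ccomp_idr[of \<psi>] pc c a by simp
    hence "?lam \<cdot> ((cunit D l \<cdot> lunitor D ?U) \<odot> \<psi>) = (?lam \<cdot> (cunit D l \<odot> \<psi>)) \<cdot> (lunitor D ?U \<odot> cid D H)"
      using pc c a ccomp_assoc[of "lunitor D ?U \<odot> cid D H" "cunit D l \<odot> \<psi>" ?lam] by simp
    also have "?lam \<cdot> (cunit D l \<odot> \<psi>) = \<psi> \<cdot> lunitor D H"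
      using lunitor_nat[of \<psi>] pc by simp
    finally have 1: "?lam \<cdot> ((cunit D l \<cdot> lunitor D ?U) \<odot> \<psi>) = (\<psi> \<cdot> lunitor D H) \<cdot> (lunitor D ?U \<odot> cid D H)" .
    have "?lam \<cdot> ((?lam \<cdot> (\<nu>2 \<odot> \<nu>1)) \<odot> \<psi>) = (?lam \<cdot> (\<nu>2 \<odot> (?lam \<cdot> (\<nu>1 \<odot> \<psi>)))) \<cdot> assoc D ?U ?U H"
      using G_lem[of \<nu>2 m \<nu>1 \<psi>] pc c by simp
    thus ?thesis using 1 key by simp
  qed
  have uq: "\<psi>a = \<psi>b" if "is_cell D \<psi>a H ?I l k" "\<zeta> = ?lam \<cdot> (\<eta> \<odot> \<psi>a)"
    "is_cell D \<psi>b H ?I l k" "\<zeta> = ?lam \<cdot> (\<eta> \<odot> \<psi>b)" for \<psi>a \<psi>b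
  proof -
    note ac = that(1)[unfolded is_cell_def] and bc = that(3)[unfolded is_cell_def]
    let ?Sa = "(?lam \<cdot> (\<nu>1 \<odot> \<psi>a)) \<cdot> v"
    let ?Sb = "(?lam \<cdot> (\<nu>1 \<odot> \<psi>b)) \<cdot> v"
    have Sa: "?lam \<cdot> (\<eta> \<odot> \<psi>a) = ?lam \<cdot> (\<phi> \<odot> ?Sa)"
      by (rule T_lem) (use c e1 ac a v in simp_all)
    have Sb: "?lam \<cdot> (\<eta> \<odot> \<psi>b) = ?lam \<cdot> (\<phi> \<odot> ?Sb)"
      by (rule T_lem) (use c e1 bc a v in simp_all)
    have Sac: "is_cell D ?Sa H ?I g k" using c ac a v vk unfolding is_cell_def by simp
    have Sbc: "is_cell D ?Sb H ?I g k" using c bc a v vk unfolding is_cell_def by simp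
    have "\<exists>!\<psi>. is_cell D \<psi> H ?I g k \<and> \<zeta> = ?lam \<cdot> (\<phi> \<odot> \<psi>)" using pp a0 by blast
    hence eqS: "?Sa = ?Sb" using Sac Sbc Sa Sb that by metis
    have X: "?lam \<cdot> (\<nu>1 \<odot> \<psi>) = ((?lam \<cdot> (\<nu>1 \<odot> \<psi>)) \<cdot> v) \<cdot> lunitor D H"
      if "is_cell D \<psi> H ?I l k" for \<psi>
    proof -
      note pc = that[unfolded is_cell_def]
      have "((?lam \<cdot> (\<nu>1 \<odot> \<psi>)) \<cdot> v) \<cdot> lunitor D H = (?lam \<cdot> (\<nu>1 \<odot> \<psi>)) \<cdot> (v \<cdot> lunitor D H)"
        using pc c a v(1,2,5,6) ccomp_assoc[of "lunitor D H" v "?lam \<cdot> (\<nu>1 \<odot> \<psi>)"] by simp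
      also have "\<dots> = ?lam \<cdot> (\<nu>1 \<odot> \<psi>)" using v(3) pc c a ccomp_idr[of "?lam \<cdot> (\<nu>1 \<odot> \<psi>)"] by simp
      finally show ?thesis by simp
    qed
    have e3: "?lam \<cdot> (\<nu>1 \<odot> \<psi>a) = ?lam \<cdot> (\<nu>1 \<odot> \<psi>b)"
      using X[OF that(1)] X[OF that(3)] eqS by simp
    have e4: "(\<psi>a \<cdot> lunitor D H) \<cdot> (lunitor D ?U \<odot> cid D H) = (\<psi>b \<cdot> lunitor D H) \<cdot> (lunitor D ?U \<odot> cid D H)"
      using bk[OF that(1)] bk[OF that(3)] e3 by simp
    have iso2: "iso_cell D (lunitor D ?U \<odot> cid D H)"
      by (rule iso_hc[OF lunitor_iso iso_cid]) (use a in simp_all)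
    have e5: "\<psi>a \<cdot> lunitor D H = \<psi>b \<cdot> lunitor D H"
      by (rule cancel_r[OF iso2]) (use e4 ac bc a in simp_all)
    show ?thesis
      by (rule cancel_r[OF lunitor_iso[of H]]) (use e5 ac bc in simp_all)
  qed
  show "\<exists>!\<psi>. is_cell D \<psi> H ?I l k \<and> \<zeta> = ?lam \<cdot> (\<eta> \<odot> \<psi>)"
    using Sc Se p2(2) uq by metis
qed

end
theorem lemma6p4:
  fixes D :: "('o,'v,'h,'c) dbl" and y l :: 'v and J :: 'h and \<eta> :: 'c
  assumes "double_category D"
    and "yoneda_embedding D y"
    and "hsrc D J = vdom D y"
    and "left_kan D \<eta> J y l"
  shows "cartesian D \<eta> \<and> pointwise_left_kan D \<eta> J y l"
proof -
  interpret double_category D by fact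
  let ?m = "vcod D y"
  let ?I = "hunit D ?m"
  let ?lam = "lunitor D ?I"
  have ek: "is_cell D \<eta> J ?I y l" using assms(4) unfolding left_kan_def by auto
  have KE: "\<forall>\<zeta> k. is_cell D \<zeta> J ?I y k \<longrightarrow>
        (\<exists>!\<nu>. vertical_cell D \<nu> l k \<and> \<zeta> \<cdot> runitor D J = ?lam \<cdot> (\<eta> \<odot> \<nu>))"
    using assms(4) unfolding left_kan_def by auto
  obtain \<phi> g where p: "is_cell D \<phi> J ?I y g" "cartesian D \<phi>"
    using assms(2,3) unfolding yoneda_embedding_def by blast
  have pw: "pointwise_left_kan D \<phi> J y g" using assms(2) p unfolding yoneda_embedding_def by blast
  hence pk: "left_kan D \<phi> J y g" and
    pp: "\<forall>H \<zeta> k. hsrc D H = htgt D J \<and> is_cell D \<zeta> (hcomp D J H) ?I y k \<longrightarrow>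
        (\<exists>!\<psi>. is_cell D \<psi> H ?I g k \<and> \<zeta> = ?lam \<cdot> (\<phi> \<odot> \<psi>))"
    unfolding pointwise_left_kan_def by auto
  have KP: "\<forall>\<zeta> k. is_cell D \<zeta> J ?I y k \<longrightarrow>
        (\<exists>!\<nu>. vertical_cell D \<nu> g k \<and> \<zeta> \<cdot> runitor D J = ?lam \<cdot> (\<phi> \<odot> \<nu>))"
    using pk unfolding left_kan_def by auto
  have vl: "vdom D l = htgt D J" "vcod D l = ?m" "vdom D g = htgt D J" "vcod D g = ?m"
    using bd2[of \<eta>] bd4[of \<eta>] bd2[of \<phi>] bd4[of \<phi>] ek p(1) unfolding is_cell_def by simp_all
  obtain \<nu>2 where n2: "vertical_cell D \<nu>2 l g" "\<phi> \<cdot> runitor D J = ?lam \<cdot> (\<eta> \<odot> \<nu>2)"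
    using KE p(1) by blast
  obtain \<nu>1 where n1: "vertical_cell D \<nu>1 g l" "\<eta> \<cdot> runitor D J = ?lam \<cdot> (\<phi> \<odot> \<nu>1)"
    using KP ek by blast
  have n2c: "is_cell D \<nu>2 (hunit D (htgt D J)) ?I l g" using n2(1) vl unfolding vertical_cell_def by simp
  have n1c: "is_cell D \<nu>1 (hunit D (htgt D J)) ?I g l" using n1(1) vl unfolding vertical_cell_def by simp
  have u: "a = b" if "is_cell D a (hunit D (htgt D J)) ?I l l" "\<eta> \<cdot> runitor D J = ?lam \<cdot> (\<eta> \<odot> a)"
    "is_cell D b (hunit D (htgt D J)) ?I l l" "\<eta> \<cdot> runitor D J = ?lam \<cdot> (\<eta> \<odot> b)" for a b
  proof -
    have "\<exists>!\<nu>. vertical_cell D \<nu> l l \<and> \<eta> \<cdot> runitor D J = ?lam \<cdot> (\<eta> \<odot> \<nu>)" using KE ek by blast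
    moreover have "vertical_cell D a l l" "vertical_cell D b l l"
      using that vl unfolding vertical_cell_def by simp_all
    ultimately show ?thesis using that by blast
  qed
  have key: "?lam \<cdot> (\<nu>2 \<odot> \<nu>1) = cunit D l \<cdot> lunitor D (hunit D (htgt D J))"
    by (rule key_lem[OF ek p(1) n2c n1c n2(2) n1(2) u]) (use vl in simp_all)
  have "cartesian D \<eta>"
    by (rule cart_lem[OF ek p(1) p(2) n2c n1c n2(2) n1(2) key]) (use vl in simp_all)
  moreover have "\<forall>H \<zeta> k. hsrc D H = htgt D J \<and> is_cell D \<zeta> (hcomp D J H) ?I y k \<longrightarrow>
        (\<exists>!\<psi>. is_cell D \<psi> H ?I l k \<and> \<zeta> = ?lam \<cdot> (\<eta> \<odot> \<psi>))"
    by (rule pw_lem[OF ek p(1) n2c n1c n2(2) n1(2) key _ _ _ _ _ pp]) (use vl in simp_all)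
  ultimately show ?thesis using assms(4) unfolding pointwise_left_kan_def by simp
qed

end
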